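(* Let $n,m_1,m_2$ be positive integers with $m_2 \geq n \geq \lceil \log m_1 \rceil+\lceil \log m_2 \rceil+1$. Then $R(C_{n},K_{m_1,m_2})\leq 33m_1+49m_2$.
   Context: $C_n$ is the cycle on $n$ vertices and $K_{a,b}$ the complete bipartite graph with parts of sizes $a$ and $b$. $R(G_1,G_2)$ is the smallest $N$ such that every red/blue coloring of the edges of $K_N$ contains a red copy of $G_1$ or a blue copy of $G_2$. $\log$ denotes the logarithm to base $2$. *)

theory Defs
  imports Complex_Main
begin

text \<open>A red/blue colouring of the edges of the complete graph K_N on vertex set {0..<N}
  is represented by a symmetric predicate red; an edge {u,v} (u \<noteq> v) is blue iff it is not red.\<close>

definition red_blue_colouring :: "nat \<Rightarrow> (nat \<Rightarrow> nat \<Rightarrow> bool) \<Rightarrow> bool" where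
  "red_blue_colouring N red \<longleftrightarrow> (\<forall>u<N. \<forall>v<N. red u v = red v u)"

definition has_red_cycle :: "nat \<Rightarrow> (nat \<Rightarrow> nat \<Rightarrow> bool) \<Rightarrow> nat \<Rightarrow> bool" where
  "has_red_cycle N red n \<longleftrightarrow>
     (\<exists>vs :: nat list. length vs = n \<and> distinct vs \<and> set vs \<subseteq> {0..<N} \<and>
        (\<forall>i<n. red (vs ! i) (vs ! ((i + 1) mod n))))"

definition has_blue_Kab :: "nat \<Rightarrow> (nat \<Rightarrow> nat \<Rightarrow> bool) \<Rightarrow> nat \<Rightarrow> nat \<Rightarrow> bool" where
  "has_blue_Kab N red a b \<longleftrightarrow>
     (\<exists>A B. A \<subseteq> {0..<N} \<and> B \<subseteq> {0..<N} \<and> A \<inter> B = {} \<and> card A = a \<and> card B = b \<and>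
        (\<forall>x\<in>A. \<forall>y\<in>B. \<not> red x y))"

definition ramsey_cycle_Kab :: "nat \<Rightarrow> nat \<Rightarrow> nat \<Rightarrow> nat" where
  "ramsey_cycle_Kab n a b =
     (LEAST N. \<forall>red. red_blue_colouring N red \<longrightarrow> has_red_cycle N red n \<or> has_blue_Kab N red a b)"

end

theory Submission
  imports Defs
begin

fun rp :: "('a \<Rightarrow> 'a \<Rightarrow> bool) \<Rightarrow> 'a list \<Rightarrow> bool" where
  "rp R [] = True"
| "rp R [x] = True"
| "rp R (x # y # zs) = (R x y \<and> rp R (y # zs))"

lemma rp_Cons: "rp R (x # ys) \<longleftrightarrow> rp R ys \<and> (ys \<noteq> [] \<longrightarrow> R x (hd ys))"
  by (cases ys) auto

lemma rp_append: "rp R (xs @ ys) \<longleftrightarrow> rp R xs \<and> rp R ys \<and> (xs \<noteq> [] \<longrightarrow> ys \<noteq> [] \<longrightarrow> R (last xs) (hd ys))"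
  by (induction R xs rule: rp.induct) (auto simp: rp_Cons)

lemma rp_nth: "rp R xs \<longleftrightarrow> (\<forall>i. Suc i < length xs \<longrightarrow> R (xs!i) (xs!Suc i))"
proof (induction R xs rule: rp.induct)
  case (3 R x y zs)
  show ?case
  proof
    assume "rp R (x # y # zs)"
    then show "\<forall>i. Suc i < length (x # y # zs) \<longrightarrow> R ((x # y # zs) ! i) ((x # y # zs) ! Suc i)"
      using 3 by (auto simp: nth_Cons split: nat.splits)
  next
    assume h: "\<forall>i. Suc i < length (x # y # zs) \<longrightarrow> R ((x # y # zs) ! i) ((x # y # zs) ! Suc i)"
    have "R x y" using h[rule_format, of 0] by simp
    moreover have "rp R (y # zs)" unfolding 3
    proof (intro allI impI)
      fix i assume "Suc i < length (y # zs)"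
      then show "R ((y # zs) ! i) ((y # zs) ! Suc i)" using h[rule_format, of "Suc i"] by simp
    qed
    ultimately show "rp R (x # y # zs)" by simp
  qed
qed auto

lemma rp_rev: "(\<forall>x\<in>set xs. \<forall>y\<in>set xs. R x y = R y x) \<Longrightarrow> rp R xs \<Longrightarrow> rp R (rev xs)"
proof (induction xs)
  case (Cons x xs)
  have s: "\<forall>a\<in>set xs. \<forall>b\<in>set xs. R a b = R b a" using Cons.prems(1) by (meson list.set_intros(2))
  have r: "rp R xs" and h: "xs \<noteq> [] \<longrightarrow> R x (hd xs)" using Cons.prems(2) by (simp_all add: rp_Cons)
  have "rp R (rev xs)" using Cons.IH s r by blast
  moreover have "xs \<noteq> [] \<longrightarrow> R (last (rev xs)) x"
  proof
    assume ne: "xs \<noteq> []"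
    then have "R x (hd xs)" using h by blast
    moreover have "hd xs \<in> set xs" using ne by simp
    moreover have "R x (hd xs) = R (hd xs) x" using Cons.prems(1) \<open>hd xs \<in> set xs\<close> by (meson list.set_intros)
    ultimately show "R (last (rev xs)) x" using ne by (simp add: last_rev)
  qed
  ultimately show ?case by (simp add: rp_append)
qed simp

lemma rp_closed:
  assumes "rp R vs" "vs \<noteq> []" "R (last vs) (hd vs)" "i < length vs"
  shows "R (vs!i) (vs!((i+1) mod length vs))"
proof (cases "Suc i < length vs")
  case True then show ?thesis using assms(1) rp_nth by auto
next
  case False
  then have e: "Suc i = length vs" using assms(4) by auto
  then have "i = length vs - 1" by simp
  then have "vs ! i = last vs" using assms(2) by (simp add: last_conv_nth)
  moreover have "vs ! ((i+1) mod length vs) = hd vs" using e assms(2) by (simp add: hd_conv_nth)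
  ultimately show ?thesis using assms(3) by simp
qed

locale ctx =
  fixes N :: nat and red :: "nat \<Rightarrow> nat \<Rightarrow> bool" and m1 m2 :: nat
  assumes symr: "\<And>u v. u < N \<Longrightarrow> v < N \<Longrightarrow> red u v = red v u"
    and P: "\<And>X Y. X \<subseteq> {0..<N} \<Longrightarrow> Y \<subseteq> {0..<N} \<Longrightarrow> X \<inter> Y = {} \<Longrightarrow> m1 \<le> card X \<Longrightarrow> m2 \<le> card Y \<Longrightarrow> \<exists>x\<in>X. \<exists>y\<in>Y. red x y"
begin

definition valid where
  "valid V S T \<longleftrightarrow> S \<subseteq> V \<and> set T \<subseteq> V \<and> S \<inter> set T = {} \<and> distinct T \<and> rp red T \<and> card S \<le> m1
     \<and> (\<forall>s\<in>S. \<forall>u\<in>V - S - set T. \<not> red s u)"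

lemma dfs_aux:
  assumes V: "V \<subseteq> {0..<N}" "m1 < card V"
  shows "2*m1 + card V - (2*card S + length T) = k \<Longrightarrow> valid V S T \<Longrightarrow> \<exists>S' T'. valid V S' T' \<and> card S' = m1"
proof (induction k arbitrary: S T rule: less_induct)
  case (less k)
  have fV: "finite V" using V finite_subset by blast
  show ?case
  proof (cases "card S = m1")
    case True then show ?thesis using less by blast
  next
    case False
    then have cS: "card S < m1" using less.prems unfolding valid_def by auto
    have lT: "length T \<le> card V" using less.prems unfolding valid_def
      using distinct_card[of T] card_mono[OF fV, of "set T"] by auto
    define U where "U = V - S - set T"
    have "\<exists>S' T'. valid V S' T' \<and> 2*card S' + length T' = Suc (2*card S + length T)"
    proof (cases T)
      case Nil
      show ?thesis
      proof (cases "U = {}")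
        case True
        then have "V = S" using less.prems Nil unfolding valid_def U_def by auto
        then show ?thesis using cS V by simp
      next
        case False
        then obtain u where u: "u \<in> U" by blast
        have "valid V S [u]" using less.prems u Nil unfolding valid_def U_def by auto
        then show ?thesis using Nil by (intro exI[of _ S] exI[of _ "[u]"]) simp
      qed
    next
      case (Cons t0 ts)
      define t where "t = last T"
      show ?thesis
      proof (cases "\<exists>u\<in>U. red t u")
        case True
        then obtain u where u: "u \<in> U" "red t u" by blast
        have Tne: "T \<noteq> []" using Cons by simp
        have "rp red T" using less.prems unfolding valid_def by auto
        then have "rp red (T @ [u])" using Tne u(2) unfolding t_def by (simp add: rp_append)
        then have "valid V S (T @ [u])" using less.prems u(1) unfolding valid_def U_def
          by auto
        then show ?thesis by (intro exI[of _ S] exI[of _ "T @ [u]"]) simp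
      next
        case False
        have tT: "t \<in> set T" using Cons t_def by simp
        have dT: "distinct T" using less.prems unfolding valid_def by auto
        have Tdec: "T = butlast T @ [t]" using Cons t_def by simp
        have "set T = set (butlast T @ [t])" using Tdec by (rule arg_cong)
        then have setT: "set T = insert t (set (butlast T))" by simp
        have "distinct (butlast T @ [t])" using dT by (simp only: Tdec[symmetric])
        then have tnot: "t \<notin> set (butlast T)" by simp
        have tS: "t \<notin> S" using less.prems tT unfolding valid_def by auto
        have fS: "finite S" using less.prems fV finite_subset unfolding valid_def by blast
        have "rp red (butlast T @ [t])" using less.prems unfolding valid_def by (simp only: Tdec[symmetric])
        then have rpb: "rp red (butlast T)" by (simp only: rp_append)
        have db: "distinct (butlast T)" using dT by (simp add: distinct_butlast)
        have "V - insert t S - set (butlast T) = U" unfolding U_def using setT tnot by auto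
        then have "valid V (insert t S) (butlast T)"
          using less.prems tT tnot cS False rpb db fS tS setT unfolding valid_def U_def
          by (auto simp: card_insert_if)
        moreover have "2*card (insert t S) + length (butlast T) = Suc (2*card S + length T)"
          using fS tS Cons by simp
        ultimately show ?thesis by blast
      qed
    qed
    then obtain S' T' where st: "valid V S' T'" "2*card S' + length T' = Suc (2*card S + length T)" by blast
    have "2*m1 + card V - (2*card S' + length T') < k" using st(2) less.prems(1) cS lT by simp
    then show ?thesis using less.IH st(1) by blast
  qed
qed

lemma dfs:
  assumes V: "V \<subseteq> {0..<N}" "m1 < card V"
  shows "\<exists>T. distinct T \<and> set T \<subseteq> V \<and> rp red T \<and> card V < length T + m1 + m2"
proof -
  have "valid V {} []" unfolding valid_def by simp
  then obtain S T where st: "valid V S T" "card S = m1" using dfs_aux[OF V] by blast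
  define U where "U = V - S - set T"
  have fV: "finite V" using V finite_subset by blast
  have "card U < m2"
  proof (rule ccontr)
    assume "\<not> card U < m2"
    then obtain x y where "x \<in> S" "y \<in> U" "red x y"
      using P[of S U] st V unfolding valid_def U_def by auto
    then show False using st unfolding valid_def U_def by auto
  qed
  moreover have "V = S \<union> set T \<union> U" using st unfolding valid_def U_def by auto
  then have "card V \<le> card S + card (set T) + card U"
    by (metis card_Un_le add_le_mono1 order_trans)
  moreover have "card (set T) = length T" using st unfolding valid_def by (simp add: distinct_card)
  ultimately show ?thesis using st unfolding valid_def by auto
qed

end

definition g :: "nat \<Rightarrow> nat" where "g D = (if D = 0 then 1 else 2^(D+1))"

context ctx begin

definition NB where "NB U T = {v \<in> U. v \<notin> T \<and> (\<exists>t\<in>T. red t v)}"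

lemma NB_sub: "NB U T \<subseteq> U" unfolding NB_def by auto

lemma NB_fin: "finite U \<Longrightarrow> finite (NB U T)" using NB_sub finite_subset by blast

lemma region:
  assumes W: "W \<subseteq> {0..<N}" and cW: "5*(m1 + 2*m) + m2 \<le> card W"
  shows "\<exists>U \<subseteq> W. 10*m + m2 \<le> card U \<and>
           (\<forall>T \<subseteq> U. T \<noteq> {} \<longrightarrow> card T \<le> 2*m \<longrightarrow> 4 * card T \<le> card (NB U T))"
proof -
  define K where "K = m1 + 2*m"
  define bad where "bad S \<longleftrightarrow> S \<subseteq> W \<and> card S \<le> K \<and> card (NB W S) \<le> 4 * card S" for S
  have fW: "finite W" using W finite_subset by blast
  have "bad {}" unfolding bad_def NB_def by simp
  moreover have "\<forall>S. bad S \<longrightarrow> card S < Suc K" unfolding bad_def by auto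
  ultimately obtain S where S: "bad S" and Smax: "\<And>S'. bad S' \<Longrightarrow> card S' \<le> card S"
    using ex_has_greatest_nat[of bad "{}" card "Suc K"] by blast
  have SW: "S \<subseteq> W" and cSK: "card S \<le> K" and cNS: "card (NB W S) \<le> 4 * card S"
    using S unfolding bad_def by auto
  have fS: "finite S" using SW fW finite_subset by blast
  define U where "U = W - S - NB W S"
  have noedge: "\<forall>s\<in>S. \<forall>u\<in>U. \<not> red s u" unfolding U_def NB_def by auto
  have cU: "card W \<le> card U + 5 * card S"
  proof -
    have "W \<subseteq> U \<union> (S \<union> NB W S)" unfolding U_def by auto
    then have "card W \<le> card (U \<union> (S \<union> NB W S))"
      by (intro card_mono) (use fW U_def NB_fin[of W S] fS in auto)
    also have "\<dots> \<le> card U + (card S + card (NB W S))"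
      by (meson card_Un_le add_le_mono le_refl order_trans)
    finally show ?thesis using cNS by linarith
  qed
  have cS: "card S < m1"
  proof (rule ccontr)
    assume "\<not> card S < m1"
    moreover have "m2 \<le> card U" using cU mult_le_mono2[OF cSK, of 5] cW unfolding K_def by linarith
    moreover have "U \<subseteq> {0..<N}" "S \<subseteq> {0..<N}" "S \<inter> U = {}" using W SW unfolding U_def by auto
    ultimately obtain x y where "x \<in> S" "y \<in> U" "red x y" using P[of S U] by auto
    then show False using noedge by auto
  qed
  have "10*m + m2 \<le> card U" using cU cS cW[unfolded distrib_left] by linarith
  moreover have "\<forall>T \<subseteq> U. T \<noteq> {} \<longrightarrow> card T \<le> 2*m \<longrightarrow> 4 * card T \<le> card (NB U T)"
  proof (intro allI impI)
    fix T assume TU: "T \<subseteq> U" and Tne: "T \<noteq> {}" and cT: "card T \<le> 2*m"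
    show "4 * card T \<le> card (NB U T)"
    proof (rule ccontr)
      assume less: "\<not> 4 * card T \<le> card (NB U T)"
      have fT: "finite T" using TU fW U_def finite_subset by blast
      have disj: "S \<inter> T = {}" using TU U_def by auto
      have sub: "NB W (S \<union> T) \<subseteq> NB W S \<union> NB U T" unfolding NB_def U_def using TU by auto
      have "card (NB W (S \<union> T)) \<le> card (NB W S \<union> NB U T)"
      proof (rule card_mono)
        have "finite U" using fW U_def by auto
        then show "finite (NB W S \<union> NB U T)" using NB_fin fW by blast
      qed (rule sub)
      also have "\<dots> \<le> card (NB W S) + card (NB U T)" by (rule card_Un_le)
      also have "\<dots> \<le> 4 * card (S \<union> T)" using less cNS card_Un_disjoint[OF fS fT disj] by linarith
      finally have b1: "card (NB W (S \<union> T)) \<le> 4 * card (S \<union> T)" .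
      have cST: "card (S \<union> T) = card S + card T" using card_Un_disjoint[OF fS fT disj] .
      have "card T > 0" using fT Tne by auto
      then have "bad (S \<union> T)" unfolding bad_def using b1 cST cS cT SW TU U_def unfolding K_def by auto
      then have "card (S \<union> T) \<le> card S" by (rule Smax)
      then show False using cST \<open>card T > 0\<close> by linarith
    qed
  qed
  moreover have "U \<subseteq> W" unfolding U_def by auto
  ultimately show ?thesis by blast
qed


lemma tree:
  assumes U: "U \<subseteq> {0..<N}" and r: "r \<in> U"
    and ex: "\<forall>T \<subseteq> U. T \<noteq> {} \<longrightarrow> card T \<le> E \<longrightarrow> 4 * card T \<le> card (NB U T)"
  shows "(\<forall>j<D. g j \<le> E) \<Longrightarrow> \<exists>X B. X \<subseteq> B \<and> B \<subseteq> U \<and> finite B \<and> card X = g D \<and> card B + 1 \<le> 2 * card X \<and>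
     (\<forall>x\<in>X. \<exists>vs. length vs = Suc D \<and> hd vs = r \<and> last vs = x \<and> distinct vs \<and> set vs \<subseteq> B \<and> rp red vs)"
proof (induction D)
  case 0
  show ?case
    by (rule exI[of _ "{r}"], rule exI[of _ "{r}"]) (use r in \<open>auto simp: g_def intro!: exI[of _ "[r]"]\<close>)
next
  case (Suc D)
  then obtain X B where XB: "X \<subseteq> B" "B \<subseteq> U" "finite B" "card X = g D" "card B + 1 \<le> 2 * card X"
    and paths: "\<forall>x\<in>X. \<exists>vs. length vs = Suc D \<and> hd vs = r \<and> last vs = x \<and> distinct vs \<and> set vs \<subseteq> B \<and> rp red vs"
    by auto
  have fU: "finite U" using U finite_subset by blast
  have fX: "finite X" using XB finite_subset by blast
  have gpos: "g D \<ge> 1" unfolding g_def by auto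
  have Xne: "X \<noteq> {}" using XB(4) gpos by auto
  have "card X \<le> E" using Suc.prems XB(4) by auto
  moreover have "X \<subseteq> U" using XB by auto
  ultimately have e4: "4 * card X \<le> card (NB U X)" using ex Xne by blast
  define C where "C = NB U X - B"
  have CB: "NB U X - B = NB U X - (B - X)" unfolding NB_def by auto
  have "card (NB U X) \<le> card C + card (B - X)"
  proof -
    have "NB U X \<subseteq> C \<union> (B - X)" unfolding C_def using CB by auto
    then have "card (NB U X) \<le> card (C \<union> (B - X))"
      by (intro card_mono) (use XB fU C_def NB_fin[of U X] in \<open>auto intro: finite_subset\<close>)
    also have "\<dots> \<le> card C + card (B - X)" by (rule card_Un_le)
    finally show ?thesis .
  qed
  moreover have "card (B - X) = card B - card X" using XB fX by (simp add: card_Diff_subset)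
  ultimately have cC: "3 * card X + 1 \<le> card C" using e4 XB(5) by linarith
  have gS: "g (Suc D) \<le> 3 * g D + 1" and gS2: "2 * g D \<le> g (Suc D)" unfolding g_def by auto
  obtain X' where X': "X' \<subseteq> C" "card X' = g (Suc D)" "finite X'"
    using obtain_subset_with_card_n[of "g (Suc D)" C] cC gS XB(4) by auto
  have X'B: "X' \<inter> B = {}" using X' C_def by auto
  define B' where "B' = B \<union> X'"
  have cB': "card B' = card B + card X'" unfolding B'_def using card_Un_disjoint[OF XB(3) X'(3)] X'B by auto
  have "X' \<subseteq> B'" "B' \<subseteq> U" "finite B'" using X' XB C_def NB_sub[of U X] unfolding B'_def by auto
  moreover have "card B' + 1 \<le> 2 * card X'" using cB' XB(4,5) X'(2) gS2 by linarith
  moreover have "\<forall>x\<in>X'. \<exists>vs. length vs = Suc (Suc D) \<and> hd vs = r \<and> last vs = x \<and> distinct vs \<and> set vs \<subseteq> B' \<and> rp red vs"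
  proof
    fix x' assume x': "x' \<in> X'"
    then have "x' \<in> NB U X" "x' \<notin> B" using X' C_def by auto
    then obtain x where x: "x \<in> X" "red x x'" unfolding NB_def by auto
    then obtain vs where vs: "length vs = Suc D" "hd vs = r" "last vs = x" "distinct vs" "set vs \<subseteq> B" "rp red vs"
      using paths by blast
    have ne: "vs \<noteq> []" using vs(1) by auto
    have "rp red (vs @ [x'])" using vs(6) vs(3) x(2) ne by (simp add: rp_append)
    moreover have "distinct (vs @ [x'])" using vs(4,5) \<open>x' \<notin> B\<close> by auto
    moreover have "set (vs @ [x']) \<subseteq> B'" using vs(5) x' unfolding B'_def by auto
    ultimately show "\<exists>vs. length vs = Suc (Suc D) \<and> hd vs = r \<and> last vs = x' \<and> distinct vs \<and> set vs \<subseteq> B' \<and> rp red vs"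
      using vs(1,2) ne by (intro exI[of _ "vs @ [x']"]) auto
  qed
  ultimately show ?case using X'(2) by blast
qed

end

lemma logfacts:
  fixes m :: nat assumes m: "1 \<le> m"
  shows "m \<le> 2^(nat \<lceil>log 2 (real m)\<rceil>)"
    and "nat \<lceil>log 2 (real m)\<rceil> \<ge> 1 \<Longrightarrow> 2^(nat \<lceil>log 2 (real m)\<rceil> - 1) < m"
proof -
  define c where "c = \<lceil>log 2 (real m)\<rceil>"
  have l0: "log 2 (real m) \<ge> 0" using m by simp
  then have c0: "c \<ge> 0" unfolding c_def by simp
  have rc: "real (nat c) = of_int c" using c0 by simp
  have mp: "real m = 2 powr (log 2 (real m))" using m by simp
  have "2 powr (log 2 (real m)) \<le> 2 powr (real (nat c))"
    using rc unfolding c_def by (intro powr_mono) auto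
  then have "real m \<le> 2 ^ nat c" using mp by (simp add: powr_realpow)
  then show "m \<le> 2^(nat \<lceil>log 2 (real m)\<rceil>)" unfolding c_def
    by (metis of_nat_le_iff of_nat_numeral of_nat_power)
  assume "nat \<lceil>log 2 (real m)\<rceil> \<ge> 1"
  then have c1: "nat c \<ge> 1" unfolding c_def by simp
  have "real (nat c - 1) = of_int c - 1" using c1 rc by auto
  also have "\<dots> < log 2 (real m)" unfolding c_def by linarith
  finally have "2 powr (real (nat c - 1)) < 2 powr (log 2 (real m))"
    by (intro powr_less_mono) auto
  then have "2 ^ (nat c - 1) < real m" using mp by (simp add: powr_realpow)
  then show "2^(nat \<lceil>log 2 (real m)\<rceil> - 1) < m" unfolding c_def
    by (metis of_nat_less_iff of_nat_numeral of_nat_power)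
qed

context ctx begin

lemma few_nonadj:
  assumes "distinct q" "set q \<subseteq> V" "V \<subseteq> {0..<N}" "U \<subseteq> {0..<N}" "V \<inter> U = {}" "m2 \<le> card U"
  shows "card {i. i < length q \<and> (\<forall>u\<in>U. \<not> red (q!i) u)} < m1"
proof (rule ccontr)
  define Q where "Q = {i. i < length q \<and> (\<forall>u\<in>U. \<not> red (q!i) u)}"
  assume "\<not> card {i. i < length q \<and> (\<forall>u\<in>U. \<not> red (q!i) u)} < m1"
  then have cQ: "m1 \<le> card Q" unfolding Q_def by simp
  have inj: "inj_on ((!) q) Q" unfolding Q_def inj_on_def using assms(1) by (auto simp: nth_eq_iff_index_eq)
  have "card ((!) q ` Q) = card Q" using inj by (rule card_image)
  moreover have "(!) q ` Q \<subseteq> V" using assms(2) unfolding Q_def by auto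
  moreover have "(!) q ` Q \<subseteq> {0..<N}" "(!) q ` Q \<inter> U = {}" using calculation(2) assms(3,5) by auto
  ultimately obtain x y where "x \<in> (!) q ` Q" "y \<in> U" "red x y"
    using P[of "(!) q ` Q" U] cQ assms(4,6) by auto
  then show False unfolding Q_def by auto
qed

lemma cyc:
  assumes N: "23*m1+14*m2 \<le> N" and m1: "1 \<le> m1" and s: "1 \<le> s" "s \<le> m2"
    and n: "n = D1 + D2 + s + 1"
    and g1: "m1 \<le> g D1" "\<forall>j<D1. g j \<le> 2*m1" and g2: "m2 \<le> g D2" "\<forall>j<D2. g j \<le> 2*m2"
  shows "has_red_cycle N red n"
proof -
  define V1 where "V1 = {0..<3*m1+2*m2}"
  define W1 where "W1 = {3*m1+2*m2..<18*m1+3*m2}"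
  define W2 where "W2 = {18*m1+3*m2..<23*m1+14*m2}"
  have V1N: "V1 \<subseteq> {0..<N}" and W1N: "W1 \<subseteq> {0..<N}" and W2N: "W2 \<subseteq> {0..<N}"
    using N unfolding V1_def W1_def W2_def by auto
  have d12: "W1 \<inter> W2 = {}" and dv1: "V1 \<inter> W1 = {}" and dv2: "V1 \<inter> W2 = {}"
    unfolding V1_def W1_def W2_def by auto
  obtain U1 where U1: "U1 \<subseteq> W1" "10*m1 + m2 \<le> card U1"
    "\<forall>T \<subseteq> U1. T \<noteq> {} \<longrightarrow> card T \<le> 2*m1 \<longrightarrow> 4 * card T \<le> card (NB U1 T)"
    using region[OF W1N, of m1] unfolding W1_def by auto
  obtain U2 where U2: "U2 \<subseteq> W2" "10*m2 + m2 \<le> card U2"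
    "\<forall>T \<subseteq> U2. T \<noteq> {} \<longrightarrow> card T \<le> 2*m2 \<longrightarrow> 4 * card T \<le> card (NB U2 T)"
    using region[OF W2N, of m2] unfolding W2_def by auto
  have U1N: "U1 \<subseteq> {0..<N}" and U2N: "U2 \<subseteq> {0..<N}" using U1 U2 W1N W2N by auto
  have dU: "U1 \<inter> U2 = {}" using U1 U2 d12 by auto
  obtain q where q: "distinct q" "set q \<subseteq> V1" "rp red q" "card V1 < length q + m1 + m2"
    using dfs[OF V1N] m1 unfolding V1_def by auto
  have lq: "2*m1 + m2 + 1 \<le> length q" using q(4) unfolding V1_def by simp
  have stem: "\<exists>u1 u2 mid. u1 \<in> U1 \<and> u2 \<in> U2 \<and> length mid = s - 1 \<and> set mid \<subseteq> V1 \<and> distinct mid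
      \<and> rp red (u1 # mid @ [u2])"
  proof (cases "s = 1")
    case True
    obtain u1 u2 where "u1 \<in> U1" "u2 \<in> U2" "red u1 u2"
      using P[OF U1N U2N dU] U1(2) U2(2) by fastforce
    then show ?thesis using True by (intro exI[of _ u1] exI[of _ u2] exI[of _ "[]"]) auto
  next
    case False
    then have s2: "s \<ge> 2" using s by auto
    define c where "c = s - 2"
    define Q1 where "Q1 = {i. i < length q \<and> (\<forall>u\<in>U1. \<not> red (q!i) u)}"
    define Q2 where "Q2 = {i. i < length q \<and> (\<forall>u\<in>U2. \<not> red (q!i) u)}"
    define A where "A = {j. j + c \<in> Q2}"
    have cQ1: "card Q1 < m1" unfolding Q1_def
      by (rule few_nonadj[OF q(1,2) V1N U1N]) (use U1 dv1 in auto)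
    have cQ2: "card Q2 < m1" unfolding Q2_def
      by (rule few_nonadj[OF q(1,2) V1N U2N]) (use U2 dv2 in auto)
    have fQ1: "finite Q1" and fQ2: "finite Q2" unfolding Q1_def Q2_def by auto
    have cA: "card A \<le> card Q2"
      by (rule card_inj_on_le[of "\<lambda>j. j + c"]) (auto simp: A_def fQ2 inj_on_def)
    have fA: "finite A" unfolding A_def Q2_def by (rule finite_subset[of _ "{..<length q}"]) auto
    define J where "J = {..<length q + 2 - s}"
    have "\<not> J \<subseteq> Q1 \<union> A"
    proof
      assume "J \<subseteq> Q1 \<union> A"
      then have "card J \<le> card (Q1 \<union> A)" using fQ1 fA by (intro card_mono) auto
      also have "\<dots> \<le> card Q1 + card A" by (rule card_Un_le)
      finally show False using cQ1 cQ2 cA lq s unfolding J_def by simp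
    qed
    then obtain j where j: "j < length q + 2 - s" "j \<notin> Q1" "j \<notin> A" unfolding J_def by auto
    have jl: "j + c < length q" using j(1) s2 unfolding c_def by simp
    obtain u1 where u1: "u1 \<in> U1" "red (q!j) u1" using j(2) jl unfolding Q1_def by auto
    obtain u2 where u2: "u2 \<in> U2" "red (q!(j+c)) u2" using j(3) jl unfolding A_def Q2_def by auto
    define mid where "mid = take (s-1) (drop j q)"
    have lmid: "length mid = s - 1" unfolding mid_def using jl s2 unfolding c_def by simp
    have midn: "\<And>i. i < s - 1 \<Longrightarrow> mid ! i = q ! (j + i)" unfolding mid_def using jl s2 unfolding c_def by simp
    have "set mid \<subseteq> set q" unfolding mid_def by (meson set_drop_subset set_take_subset subset_trans)
    then have smid: "set mid \<subseteq> V1" using q(2) by auto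
    have dmid: "distinct mid" unfolding mid_def using q(1) by simp
    have rq: "\<And>i. Suc i < length q \<Longrightarrow> red (q!i) (q!Suc i)" using q(3) rp_nth by blast
    have rmid: "rp red mid" unfolding rp_nth
    proof (intro allI impI)
      fix i assume "Suc i < length mid"
      then show "red (mid ! i) (mid ! Suc i)" using midn lmid rq jl unfolding c_def by auto
    qed
    have ne: "mid \<noteq> []" using lmid s2 by auto
    have hm: "hd mid = q!j" using midn[of 0] ne s2 by (simp add: hd_conv_nth)
    have "s - 2 < s - 1" using s2 by simp
    then have e1: "mid ! (s-2) = q!(j+c)" using midn unfolding c_def by blast
    have "length mid - 1 = s - 2" using lmid by simp
    then have lm: "last mid = q!(j+c)" using e1 ne by (simp add: last_conv_nth)
    have qN: "\<And>i. i < length q \<Longrightarrow> q!i < N" using q(2) V1N by (meson atLeastLessThan_iff nth_mem subset_iff)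
    have u1N: "u1 < N" using u1 U1N by auto
    have "red u1 (q!j)" using u1(2) symr[OF u1N qN[of j]] jl by simp
    then have "rp red (u1 # mid @ [u2])" using rmid ne hm lm u2(2) by (simp add: rp_append rp_Cons)
    then show ?thesis using u1 u2 lmid smid dmid by blast
  qed
  then obtain u1 u2 mid where st: "u1 \<in> U1" "u2 \<in> U2" "length mid = s - 1" "set mid \<subseteq> V1" "distinct mid"
    "rp red (u1 # mid @ [u2])" by blast
  obtain X1 B1 where T1: "X1 \<subseteq> B1" "B1 \<subseteq> U1" "card X1 = g D1"
    "\<forall>x\<in>X1. \<exists>vs. length vs = Suc D1 \<and> hd vs = u1 \<and> last vs = x \<and> distinct vs \<and> set vs \<subseteq> B1 \<and> rp red vs"
    using tree[OF U1N st(1) U1(3) g1(2)] by blast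
  obtain X2 B2 where T2: "X2 \<subseteq> B2" "B2 \<subseteq> U2" "card X2 = g D2"
    "\<forall>x\<in>X2. \<exists>vs. length vs = Suc D2 \<and> hd vs = u2 \<and> last vs = x \<and> distinct vs \<and> set vs \<subseteq> B2 \<and> rp red vs"
    using tree[OF U2N st(2) U2(3) g2(2)] by blast
  have "X1 \<subseteq> {0..<N}" using T1(1,2) U1N by blast
  moreover have "X2 \<subseteq> {0..<N}" using T2(1,2) U2N by blast
  moreover have "X1 \<inter> X2 = {}" using T1(1,2) T2(1,2) dU by blast
  moreover have "m1 \<le> card X1" "m2 \<le> card X2" using T1(3) T2(3) g1(1) g2(1) by simp_all
  ultimately obtain x y where xy: "x \<in> X1" "y \<in> X2" "red x y"
    using P[of X1 X2] by blast
  obtain px where px: "length px = Suc D1" "hd px = u1" "last px = x" "distinct px" "set px \<subseteq> B1" "rp red px"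
    using T1(4) xy(1) by blast
  have pxU: "set px \<subseteq> U1" using px(5) T1(2) by blast
  obtain py where py: "length py = Suc D2" "hd py = u2" "last py = y" "distinct py" "set py \<subseteq> B2" "rp red py"
    using T2(4) xy(2) by blast
  have pyU: "set py \<subseteq> U2" using py(5) T2(2) by blast
  define cyc where "cyc = rev px @ mid @ py"
  have pxne: "px \<noteq> []" and pyne: "py \<noteq> []" using px(1) py(1) by auto
  have lc: "length cyc = n" unfolding cyc_def using px(1) py(1) st(3) n s by simp
  have i1: "set px \<inter> set mid = {}" using pxU st(4) U1(1) dv1 by blast
  have i2: "set px \<inter> set py = {}" using pxU pyU dU by blast
  have i3: "set mid \<inter> set py = {}" using pyU st(4) U2(1) dv2 by blast
  have dc: "distinct cyc" unfolding cyc_def distinct_append set_append set_rev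
    using px(4) py(4) st(5) i1 i2 i3 by auto
  have sc: "set cyc \<subseteq> {0..<N}" unfolding cyc_def using pxU pyU st(4) U1N U2N V1N by auto
  have rpx: "rp red (rev px)"
  proof (rule rp_rev[OF _ px(6)])
    show "\<forall>a\<in>set px. \<forall>b\<in>set px. red a b = red b a"
    proof (intro ballI)
      fix a b assume "a \<in> set px" "b \<in> set px"
      then have "a < N" "b < N" using pxU U1N by auto
      then show "red a b = red b a" by (rule symr)
    qed
  qed
  have E: "rp red ((u1 # mid) @ [u2])" using st(6) by simp
  have a1: "rp red (u1 # mid)" and a2: "red (last (u1 # mid)) u2" using E[unfolded rp_append] by auto
  have "rp red ((u1 # mid) @ py)" unfolding rp_append[of red "u1 # mid" py]
    using a1 a2 py(2,6) pyne by simp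
  then have E2: "rp red (u1 # (mid @ py))" by simp
  have b1: "rp red (mid @ py)" and b2: "red u1 (hd (mid @ py))" using E2[unfolded rp_Cons] pyne by blast+
  have "rp red cyc" unfolding cyc_def using rpx b1 b2 px(2) pxne by (simp add: rp_append last_rev)
  moreover have "cyc \<noteq> []" unfolding cyc_def using pyne by simp
  moreover have "red (last cyc) (hd cyc)"
  proof -
    have "last cyc = y" unfolding cyc_def using pyne py(3) by simp
    moreover have "hd cyc = x" unfolding cyc_def using pxne px(3) by (simp add: hd_rev)
    moreover have "x < N" using xy(1) T1(1,2) U1N by fastforce
    moreover have "y < N" using xy(2) T2(1,2) U2N by fastforce
    ultimately show ?thesis using xy(3) symr[of x y] by metis
  qed
  ultimately have "\<forall>i<n. red (cyc!i) (cyc!((i+1) mod n))" using rp_closed[of red cyc] lc by auto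
  then show ?thesis unfolding has_red_cycle_def using lc dc sc by blast
qed

end

lemma g_le: "g j \<le> 2^(j+1)" unfolding g_def by auto

theorem lemma2p7:
  fixes n m1 m2 :: nat
  assumes "0 < n" "0 < m1" "0 < m2" and n3: "3 \<le> n"
    and "m2 \<ge> n"
    and "real n \<ge> of_int \<lceil>log 2 (real m1)\<rceil> + of_int \<lceil>log 2 (real m2)\<rceil> + 1"
  shows "ramsey_cycle_Kab n m1 m2 \<le> 33 * m1 + 49 * m2"
proof -
  define N0 where "N0 = 33 * m1 + 49 * m2"
  define A where "A = nat \<lceil>log 2 (real m1)\<rceil>"
  define B where "B = nat \<lceil>log 2 (real m2)\<rceil>"
  have m1ge: "1 \<le> m1" and m2ge: "1 \<le> m2" using assms by auto
  have A1: "m1 \<le> 2^A" and A2: "A \<ge> 1 \<Longrightarrow> 2^(A-1) < m1" using logfacts[OF m1ge] unfolding A_def by auto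
  have B1: "m2 \<le> 2^B" and B2: "B \<ge> 1 \<Longrightarrow> 2^(B-1) < m2" using logfacts[OF m2ge] unfolding B_def by auto
  have l1: "log 2 (real m1) \<ge> 0" and l2: "log 2 (real m2) \<ge> 0" using m1ge m2ge by auto
  have "real A = of_int \<lceil>log 2 (real m1)\<rceil>" unfolding A_def using l1 by simp
  moreover have "real B = of_int \<lceil>log 2 (real m2)\<rceil>" unfolding B_def using l2 by simp
  ultimately have "real (A + B + 1) \<le> real n" using assms(6) by simp
  then have nAB: "A + B + 1 \<le> n" by linarith
  have B2': "B \<ge> 2"
  proof (rule ccontr)
    assume "\<not> B \<ge> 2"
    then have "B \<le> 1" by simp
    then have "(2::nat)^B \<le> 2^1" by (intro power_increasing) auto
    then show False using B1 n3 assms(5) by simp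
  qed
  define D1 where "D1 = A"
  define D2 where "D2 = B - 1"
  define s where "s = n - A - B"
  have s1: "1 \<le> s" and s2: "s \<le> m2" using nAB assms(5) unfolding s_def by auto
  have nD: "n = D1 + D2 + s + 1" using nAB B2' unfolding D1_def D2_def s_def by simp
  have g1: "m1 \<le> g D1"
  proof (cases "A = 0")
    case True then show ?thesis using A1 unfolding D1_def g_def by simp
  next
    case False
    have "(2::nat)^A \<le> 2^(A+1)" by (intro power_increasing) auto
    then show ?thesis using A1 False unfolding D1_def g_def by simp
  qed
  have g1': "\<forall>j<D1. g j \<le> 2*m1"
  proof (intro allI impI)
    fix j assume j: "j < D1"
    then have "(2::nat)^(j+1) \<le> 2^A" unfolding D1_def by (intro power_increasing) auto
    moreover have "(2::nat)^A = 2 * 2^(A-1)" using j unfolding D1_def by (cases A) auto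
    moreover have "2^(A-1) < m1" using A2 j unfolding D1_def by auto
    ultimately show "g j \<le> 2*m1" using g_le[of j] by linarith
  qed
  have g2: "m2 \<le> g D2" using B1 B2' unfolding D2_def g_def by auto
  have g2': "\<forall>j<D2. g j \<le> 2*m2"
  proof (intro allI impI)
    fix j assume j: "j < D2"
    then have "(2::nat)^(j+1) \<le> 2^(B-1)" unfolding D2_def by (intro power_increasing) auto
    moreover have "2^(B-1) < m2" using B2 B2' by auto
    ultimately show "g j \<le> 2*m2" using g_le[of j] by linarith
  qed
  have key: "\<forall>red. red_blue_colouring N0 red \<longrightarrow> has_red_cycle N0 red n \<or> has_blue_Kab N0 red m1 m2"
  proof (intro allI impI)
    fix red assume col: "red_blue_colouring N0 red"
    show "has_red_cycle N0 red n \<or> has_blue_Kab N0 red m1 m2"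
    proof (cases "has_blue_Kab N0 red m1 m2")
      case True then show ?thesis by simp
    next
      case False
      have "ctx N0 red m1 m2"
      proof
        fix u v assume "u < N0" "v < N0"
        then show "red u v = red v u" using col unfolding red_blue_colouring_def by blast
      next
        fix X Y assume XY: "X \<subseteq> {0..<N0}" "Y \<subseteq> {0..<N0}" "X \<inter> Y = {}" "m1 \<le> card X" "m2 \<le> card Y"
        obtain X0 where X0: "X0 \<subseteq> X" "card X0 = m1" using obtain_subset_with_card_n[OF XY(4)] by metis
        obtain Y0 where Y0: "Y0 \<subseteq> Y" "card Y0 = m2" using obtain_subset_with_card_n[OF XY(5)] by metis
        have "X0 \<subseteq> {0..<N0}" "Y0 \<subseteq> {0..<N0}" "X0 \<inter> Y0 = {}" using X0 Y0 XY by auto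
        then have "\<not> (\<forall>x\<in>X0. \<forall>y\<in>Y0. \<not> red x y)" using False X0(2) Y0(2) unfolding has_blue_Kab_def by blast
        then show "\<exists>x\<in>X. \<exists>y\<in>Y. red x y" using X0 Y0 by blast
      qed
      then interpret ctx N0 red m1 m2 .
      have "has_red_cycle N0 red n"
        by (rule cyc[OF _ m1ge s1 s2 nD g1 g1' g2 g2']) (simp add: N0_def)
      then show ?thesis by simp
    qed
  qed
  show ?thesis unfolding ramsey_cycle_Kab_def N0_def[symmetric]
    by (rule Least_le) (rule key)
qed

end
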